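(* Let $m\ge2$ be an integer, let $x_0,\dots,x_N\in[0,1]$ be distinct nodes, and let $$G(x)=\frac{\operatorname{sign}x}{2}\left(\frac{e^x-e^{-x}}{2}-\sum_{k=1}^{m-1}\frac{x^{2k-1}}{(2k-1)!}\right).$$ Let $M$ be the $(N+1)\times(N+1)$ matrix $M=(G(x_\beta-x_\gamma))_{\beta,\gamma=0}^N$ and let $S$ be the $m\times(N+1)$ matrix whose rows are $(x_0^{\alpha},\dots,x_N^{\alpha})$ for $\alpha=0,1,\dots,m-2$ and, as last row, $(e^{-x_0},\dots,e^{-x_N})$. If $S$ has a right inverse, then the $(N+1+m)\times(N+1+m)$ matrix $$Q=\begin{pmatrix}M&S^*\\ S&0\end{pmatrix}$$ is nonsingular, where $S^*$ denotes the transpose of $S$.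
   Context: $Q$ is the matrix of the linear system $\sum_\gamma\overline C_\gamma G(x_\beta-x_\gamma)+\sum_{\alpha=0}^{m-2}\lambda_\alpha x_\beta^\alpha+\lambda_{m-1}e^{-x_\beta}=F(x_\beta)$ ($\beta=0,\dots,N$), $\sum_\gamma\overline C_\gamma x_\gamma^\alpha=0$ ($\alpha=0,\dots,m-2$), $\sum_\gamma\overline C_\gamma e^{-x_\gamma}=0$, which arises in minimizing the norm of the error functional of the quadrature formula $\int_0^1\varphi\,dx\cong\sum_\beta C_\beta\varphi(x_\beta)$ in the space $W_2^{(m,m-1)}(0,1)$ with norm $\left(\int_0^1(\varphi^{(m)}+\varphi^{(m-1)})^2dx\right)^{1/2}$. *)

theory Defs
  imports Complex_Main "Jordan_Normal_Form.Matrix"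
begin

definition G :: "nat \<Rightarrow> real \<Rightarrow> real" where
  "G m x = sgn x / 2 * ((exp x - exp (- x)) / 2
      - (\<Sum>k = 1..m - 1. x ^ (2 * k - 1) / fact (2 * k - 1)))"

definition M_mat :: "nat \<Rightarrow> nat \<Rightarrow> (nat \<Rightarrow> real) \<Rightarrow> real mat" where
  "M_mat m N x = mat (N + 1) (N + 1) (\<lambda>(\<beta>, \<gamma>). G m (x \<beta> - x \<gamma>))"

definition S_mat :: "nat \<Rightarrow> nat \<Rightarrow> (nat \<Rightarrow> real) \<Rightarrow> real mat" where
  "S_mat m N x = mat m (N + 1)
     (\<lambda>(\<alpha>, \<gamma>). if \<alpha> \<le> m - 2 then x \<gamma> ^ \<alpha> else exp (- x \<gamma>))"

definition Q_mat :: "nat \<Rightarrow> nat \<Rightarrow> (nat \<Rightarrow> real) \<Rightarrow> real mat" where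
  "Q_mat m N x = four_block_mat (M_mat m N x) (transpose_mat (S_mat m N x))
                                (S_mat m N x) (0\<^sub>m m m)"

end

theory Submission imports Defs "HOL-Analysis.Analysis" "Jordan_Normal_Form.Determinant"
begin

definition eT :: "nat \<Rightarrow> real \<Rightarrow> real" where
  "eT k r = exp (- r) - (\<Sum>j<k. (- r) ^ j / fact j)"

definition gg :: "nat \<Rightarrow> real \<Rightarrow> real" where
  "gg m d = (exp d - exp (- d)) / 2 - (\<Sum>k = 1..m - 1. d ^ (2 * k - 1) / fact (2 * k - 1))"

definition RR :: "nat \<Rightarrow> real \<Rightarrow> real" where
  "RR k u = exp u - (\<Sum>j<k. u ^ j / fact j)"

lemma eT_0: "eT 0 r = exp (- r)" by (simp add: eT_def)

lemma eT_Suc: "eT (Suc k) r = eT k r - (- r) ^ k / fact k"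
  by (simp add: eT_def)

lemma eT_at0: "eT (Suc k) 0 = 0"
  unfolding eT_def sum.lessThan_Suc_shift by simp

lemma eT_deriv: "((eT (Suc k)) has_real_derivative - eT k r) (at r)"
proof (induction k)
  case 0
  show ?case unfolding eT_def
    by (auto intro!: derivative_eq_intros)
next
  case (Suc k)
  have d2: "((\<lambda>r. (- r) ^ Suc k / fact (Suc k)) has_real_derivative - ((- r) ^ k / fact k)) (at r)"
  proof -
    have d0: "((\<lambda>r. (- r) ^ Suc k) has_real_derivative (real (Suc k) * (- r) ^ k * (- 1))) (at r)"
      apply (auto intro!: derivative_eq_intros)
      apply (cases k)
       apply (auto simp: field_simps)
      done
    have eq: "real (Suc k) * (- r) ^ k * (- 1) / fact (Suc k) = - ((- r) ^ k / fact k)"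
    proof -
      have "fact (Suc k) = real (Suc k) * (fact k :: real)" by (simp add: fact_Suc)
      moreover have "(fact k :: real) > 0" by simp
      ultimately show ?thesis by (simp add: field_simps del: of_nat_Suc)
    qed
    show ?thesis using DERIV_cdivide[OF d0, of "fact (Suc k)"] eq by simp
  qed
  have "((\<lambda>r. eT (Suc k) r - (- r) ^ Suc k / fact (Suc k)) has_real_derivative
        (- eT k r - - ((- r) ^ k / fact k))) (at r)"
    by (rule DERIV_diff[OF Suc.IH d2])
  moreover have "(\<lambda>r. eT (Suc k) r - (- r) ^ Suc k / fact (Suc k)) = eT (Suc (Suc k))"
    by (simp add: eT_Suc[of "Suc k"] fun_eq_iff)
  moreover have "- eT k r - - ((- r) ^ k / fact k) = - eT (Suc k) r"
    by (simp add: eT_Suc)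
  ultimately show ?case by simp
qed

lemma eT_cont: "continuous_on S (eT k)"
  unfolding eT_def by (intro continuous_intros) auto

lemma FTC_real:
  fixes f f' :: "real \<Rightarrow> real"
  assumes "a \<le> b" "\<And>t. (f has_real_derivative f' t) (at t)"
  shows "(f' has_integral (f b - f a)) {a..b}"
  using assms
  by (intro fundamental_theorem_of_calculus)
     (auto simp: has_real_derivative_iff_has_vector_derivative[symmetric] intro: has_field_derivative_at_within)

lemma eT_deriv_shift: "((\<lambda>t. eT (Suc a) (x - t)) has_real_derivative eT a (x - t)) (at t)"
proof -
  have "((\<lambda>t. x - t) has_real_derivative -1) (at t)"
    by (auto intro!: derivative_eq_intros)
  from DERIV_chain2[OF eT_deriv[of a "x - t"] this] show ?thesis by simp
qed

lemma ibp_step: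
  assumes "y \<le> x"
  shows "((\<lambda>t. eT a (x - t) * eT (Suc b) (y - t) + eT (Suc a) (x - t) * eT b (y - t))
          has_integral 0) {y..x}"
proof -
  have "((\<lambda>t. eT (Suc a) (x - t) * eT (Suc b) (y - t)) has_real_derivative
          (eT a (x - t) * eT (Suc b) (y - t) + eT (Suc a) (x - t) * eT b (y - t))) (at t)" for t
    using DERIV_mult[OF eT_deriv_shift[of a x t] eT_deriv_shift[of b y t]] by (simp add: mult.commute)
  from FTC_real[OF assms this] show ?thesis by (simp add: eT_at0)
qed

lemma sum_taylor_deriv:
  "((\<lambda>t. \<Sum>j<Suc k. (x - t) ^ j / fact j) has_real_derivative
      - (\<Sum>j<k. (x - t) ^ j / fact j)) (at t)"
proof (induction k)
  case 0
  then show ?case by simp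
next
  case (Suc k)
  have d2: "((\<lambda>t. (x - t) ^ Suc k / fact (Suc k)) has_real_derivative - ((x - t) ^ k / fact k)) (at t)"
  proof -
    have d0: "((\<lambda>t. (x - t) ^ Suc k) has_real_derivative (real (Suc k) * (x - t) ^ k * (- 1))) (at t)"
      apply (auto intro!: derivative_eq_intros)
      apply (cases k)
       apply (auto simp: field_simps)
      done
    have eq: "real (Suc k) * (x - t) ^ k * (- 1) / fact (Suc k) = - ((x - t) ^ k / fact k)"
    proof -
      have "fact (Suc k) = real (Suc k) * (fact k :: real)" by (simp add: fact_Suc)
      moreover have "(fact k :: real) > 0" by simp
      ultimately show ?thesis by (simp add: field_simps del: of_nat_Suc)
    qed
    show ?thesis using DERIV_cdivide[OF d0, of "fact (Suc k)"] eq by simp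
  qed
  from DERIV_add[OF Suc.IH d2] show ?case by simp
qed

lemma taylor_int:
  assumes "y \<le> x"
  shows "((\<lambda>t. (t - x) ^ k / fact k * exp (t - y)) has_integral ((-1) ^ k * RR (Suc k) (x - y))) {y..x}"
proof -
  define S where "S t = (\<Sum>j<Suc k. (x - t) ^ j / fact j)" for t
  have "((\<lambda>t. (-1) ^ k * (exp (t - y) * S t)) has_real_derivative
          (-1) ^ k * (exp (t - y) * S t + (- (\<Sum>j<k. (x - t) ^ j / fact j)) * exp (t - y))) (at t)" for t
    unfolding S_def
    by (intro DERIV_cmult DERIV_mult sum_taylor_deriv) (auto intro!: derivative_eq_intros)
  moreover have "(-1) ^ k * (exp (t - y) * S t + (- (\<Sum>j<k. (x - t) ^ j / fact j)) * exp (t - y))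
     = (t - x) ^ k / fact k * exp (t - y)" for t
  proof -
    have "(t - x) ^ k = (-1) ^ k * (x - t) ^ k"
      by (metis minus_diff_eq power_minus)
    then show ?thesis unfolding S_def by (simp add: field_simps)
  qed
  ultimately have "((\<lambda>t. (-1) ^ k * (exp (t - y) * S t)) has_real_derivative
          (t - x) ^ k / fact k * exp (t - y)) (at t)" for t by metis
  from FTC_real[OF assms this]
  have "((\<lambda>t. (t - x) ^ k / fact k * exp (t - y)) has_integral
      ((-1) ^ k * (exp (x - y) * S x) - (-1) ^ k * (exp (y - y) * S y))) {y..x}" .
  moreover have Sx: "S x = 1" unfolding S_def by (subst sum.lessThan_Suc_shift) simp
  moreover have "exp (x - y) - S y = RR (Suc k) (x - y)" unfolding S_def RR_def by simp
  moreover have "(-1) ^ k * (exp (x - y) * S x) - (-1) ^ k * (exp (y - y) * S y)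
      = (-1) ^ k * (exp (x - y) - S y)" using Sx by (simp add: right_diff_distrib)
  ultimately show ?thesis by simp
qed

definition VV :: "nat \<Rightarrow> real \<Rightarrow> real" where
  "VV k d = ((-1) ^ k * RR k d - RR k (- d)) / 2"

lemma int_k0:
  assumes "y \<le> x"
  shows "((\<lambda>t. eT k (x - t) * eT 0 (y - t)) has_integral VV k (x - y)) {y..x}"
proof (induction k)
  case 0
  have "((\<lambda>t. exp (2 * t - x - y) / 2) has_real_derivative exp (2 * t - x - y)) (at t)" for t
    by (auto intro!: derivative_eq_intros)
  from FTC_real[OF assms this] have i0: "((\<lambda>t. exp (2 * t - x - y)) has_integral
     (exp (2 * x - x - y) / 2 - exp (2 * y - x - y) / 2)) {y..x}" .
  have "exp (t - x) * exp (t - y) = exp (2 * t - x - y)" for t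
  proof -
    have "exp (t - x) * exp (t - y) = exp ((t - x) + (t - y))" by (rule mult_exp_exp)
    moreover have "(t - x) + (t - y) = 2 * t - x - y" by simp
    ultimately show ?thesis by simp
  qed
  then have eq: "(\<lambda>t. eT 0 (x - t) * eT 0 (y - t)) = (\<lambda>t. exp (2 * t - x - y))"
    by (simp add: eT_0 fun_eq_iff)
  have v: "VV 0 (x - y) = exp (2 * x - x - y) / 2 - exp (2 * y - x - y) / 2"
    unfolding VV_def RR_def by (simp add: diff_divide_distrib)
  show ?case unfolding eq v by (rule i0)
next
  case (Suc k)
  from has_integral_diff[OF Suc taylor_int[OF assms, of k]]
  have i1: "((\<lambda>t. eT k (x - t) * eT 0 (y - t) - (t - x) ^ k / fact k * exp (t - y)) has_integral
     VV k (x - y) - (-1) ^ k * RR (Suc k) (x - y)) {y..x}" .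
  have e1: "eT k (x - t) * eT 0 (y - t) - (t - x) ^ k / fact k * exp (t - y)
     = eT (Suc k) (x - t) * eT 0 (y - t)" for t
  proof -
    have "(- (x - t)) ^ k = (t - x) ^ k" by simp
    then have "eT (Suc k) (x - t) = eT k (x - t) - (t - x) ^ k / fact k" by (simp only: eT_Suc)
    then show ?thesis by (simp only: eT_0 left_diff_distrib minus_diff_eq)
  qed
  have eq: "(\<lambda>t. eT k (x - t) * eT 0 (y - t) - (t - x) ^ k / fact k * exp (t - y))
     = (\<lambda>t. eT (Suc k) (x - t) * eT 0 (y - t))" by (rule ext) (rule e1)
  have vv: "VV k d - (-1) ^ k * RR (Suc k) d = VV (Suc k) d" for d
  proof -
    define sg :: real where "sg = (-1) ^ k"
    define A where "A = RR (Suc k) d"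
    define B where "B = RR (Suc k) (- d)"
    define c where "c = d ^ k / fact k"
    have r1: "RR k d = A + c" by (simp add: RR_def A_def c_def)
    have pm: "(- d) ^ k = sg * d ^ k" unfolding sg_def by (rule power_minus)
    have r2: "RR k (- d) = B + sg * c"
      by (simp add: RR_def B_def c_def pm)
    have "VV k d = (sg * (A + c) - (B + sg * c)) / 2" unfolding VV_def r1 r2 sg_def ..
    moreover have "VV (Suc k) d = (- sg * A - B) / 2" unfolding VV_def A_def B_def sg_def by simp
    ultimately show ?thesis unfolding sg_def[symmetric] A_def[symmetric] by (simp add: algebra_simps)
  qed
  show ?case using i1 unfolding eq vv .
qed

lemma int_ab:
  assumes "y \<le> x"
  shows "((\<lambda>t. eT a (x - t) * eT b (y - t)) has_integral ((-1) ^ b * VV (a + b) (x - y))) {y..x}"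
proof (induction b arbitrary: a)
  case 0
  then show ?case using int_k0[OF assms] by simp
next
  case (Suc b)
  from has_integral_diff[OF ibp_step[OF assms, of a b] Suc[of "Suc a"]]
  show ?case by simp
qed

lemma oddsum:
  fixes d :: real
  shows "(\<Sum>j<2 * n. (d ^ j - (- d) ^ j) / fact j) = 2 * (\<Sum>k = 1..n. d ^ (2 * k - 1) / fact (2 * k - 1))"
proof (induction n)
  case 0
  then show ?case by simp
next
  case (Suc n)
  have e: "2 * Suc n = Suc (Suc (2 * n))" by simp
  have o: "(- d) ^ Suc (2 * n) = - (d ^ Suc (2 * n))" 
  proof -
    have "(- d) ^ (2 * n) = d ^ (2 * n)" by (simp add: power_mult power2_eq_square)
    then show ?thesis by simp
  qed
  have "(\<Sum>j<2 * Suc n. (d ^ j - (- d) ^ j) / fact j)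
      = (\<Sum>j<2 * n. (d ^ j - (- d) ^ j) / fact j) + (d ^ (2 * n) - (- d) ^ (2 * n)) / fact (2 * n)
        + (d ^ Suc (2 * n) - (- d) ^ Suc (2 * n)) / fact (Suc (2 * n))"
    unfolding e by simp
  also have "\<dots> = 2 * (\<Sum>k = 1..n. d ^ (2 * k - 1) / fact (2 * k - 1))
        + 2 * (d ^ Suc (2 * n) / fact (Suc (2 * n)))"
    unfolding Suc o by simp
  also have "\<dots> = 2 * (\<Sum>k = 1..Suc n. d ^ (2 * k - 1) / fact (2 * k - 1))"
    by (simp add: sum.cl_ivl_Suc algebra_simps)
  finally show ?case .
qed

lemma gg_VV:
  assumes "m \<ge> 1"
  shows "VV (2 * (m - 1)) d = gg m d"
proof -
  define K where "K = 2 * (m - 1)"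
  have s: "(\<Sum>j<K. (d ^ j - (- d) ^ j) / fact j) = (\<Sum>j<K. d ^ j / fact j) - (\<Sum>j<K. (- d) ^ j / fact j)"
    by (simp add: diff_divide_distrib sum_subtractf)
  have "(-1::real) ^ K = 1" unfolding K_def by simp
  then have "VV K d = ((exp d - exp (- d)) - (\<Sum>j<K. (d ^ j - (- d) ^ j) / fact j)) / 2"
    unfolding VV_def RR_def s by simp
  then have "VV (2 * (m - 1)) d = ((exp d - exp (- d)) - (\<Sum>j<2 * (m - 1). (d ^ j - (- d) ^ j) / fact j)) / 2"
    unfolding K_def .
  then show ?thesis unfolding oddsum gg_def by (simp add: field_simps)
qed

lemma key_int:
  assumes "y \<le> x" "m \<ge> 1"
  shows "((\<lambda>t. eT (m - 1) (x - t) * eT (m - 1) (y - t)) has_integral ((-1) ^ (m - 1) * gg m (x - y))) {y..x}"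
  using int_ab[OF assms(1), of "m - 1" "m - 1"] gg_VV[OF assms(2)] by (simp add: mult_2)

definition DS :: "nat set \<Rightarrow> (nat \<Rightarrow> real) \<Rightarrow> (nat \<Rightarrow> nat \<Rightarrow> real) \<Rightarrow> real" where
  "DS A c F = (\<Sum>a\<in>A. \<Sum>b\<in>A. c a * c b * F a b)"

lemma DS_diff: "DS A c (\<lambda>a b. F a b - H a b) = DS A c F - DS A c H"
  unfolding DS_def by (simp add: right_diff_distrib sum_subtractf)

lemma DS_add: "DS A c (\<lambda>a b. F a b + H a b) = DS A c F + DS A c H"
  unfolding DS_def by (simp add: distrib_left sum.distrib)

lemma DS_cmult: "DS A c (\<lambda>a b. r * F a b) = r * DS A c F"
  unfolding DS_def by (simp add: sum_distrib_left mult_ac)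

lemma DS_div: "DS A c (\<lambda>a b. F a b / r) = DS A c F / r"
  unfolding DS_def by (simp add: sum_divide_distrib)

lemma swap3: "(\<Sum>a\<in>A. \<Sum>b\<in>B. \<Sum>l\<in>L. f a b l) = (\<Sum>l\<in>L. \<Sum>a\<in>A. \<Sum>b\<in>B. f a b l)"
proof -
  have "(\<Sum>a\<in>A. \<Sum>b\<in>B. \<Sum>l\<in>L. f a b l) = (\<Sum>a\<in>A. \<Sum>l\<in>L. \<Sum>b\<in>B. f a b l)"
    by (rule sum.cong[OF refl]) (rule sum.swap)
  also have "\<dots> = (\<Sum>l\<in>L. \<Sum>a\<in>A. \<Sum>b\<in>B. f a b l)" by (rule sum.swap)
  finally show ?thesis .
qed

lemma DS_sum: "DS A c (\<lambda>a b. \<Sum>l\<in>L. F l a b) = (\<Sum>l\<in>L. DS A c (F l))"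
  unfolding DS_def sum_distrib_left by (rule swap3)

lemma DS_prod: "DS A c (\<lambda>a b. f a * g b) = (\<Sum>a\<in>A. c a * f a) * (\<Sum>b\<in>A. c b * g b)"
  unfolding DS_def by (simp add: sum_product mult_ac)

lemma poly_orth:
  fixes c x :: "nat \<Rightarrow> real"
  assumes horth: "\<And>\<alpha>. \<alpha> < m - 1 \<Longrightarrow> (\<Sum>j\<in>A. c j * x j ^ \<alpha>) = 0"
    and i: "i < m - 1"
  shows "(\<Sum>j\<in>A. c j * (t - x j) ^ i) = 0"
proof -
  have e: "c j * (t - x j) ^ i = (\<Sum>k\<le>i. (of_nat (i choose k) * (-1) ^ k * t ^ (i - k)) * (c j * x j ^ k))" for j
  proof -
    have "(t - x j) ^ i = (- x j + t) ^ i" by simp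
    also have "\<dots> = (\<Sum>k\<le>i. of_nat (i choose k) * (- x j) ^ k * t ^ (i - k))"
      by (rule binomial_ring)
    also have "\<dots> = (\<Sum>k\<le>i. of_nat (i choose k) * ((-1) ^ k * x j ^ k) * t ^ (i - k))"
    proof (rule sum.cong[OF refl])
      fix k
      have "(- x j) ^ k = (-1) ^ k * x j ^ k" by (rule power_minus)
      then show "of_nat (i choose k) * (- x j) ^ k * t ^ (i - k) = of_nat (i choose k) * ((-1) ^ k * x j ^ k) * t ^ (i - k)"
        by simp
    qed
    finally show ?thesis by (simp add: sum_distrib_left mult_ac)
  qed
  have "(\<Sum>j\<in>A. c j * (t - x j) ^ i)
      = (\<Sum>j\<in>A. \<Sum>k\<le>i. (of_nat (i choose k) * (-1) ^ k * t ^ (i - k)) * (c j * x j ^ k))"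
    using e by simp
  also have "\<dots> = (\<Sum>k\<le>i. \<Sum>j\<in>A. (of_nat (i choose k) * (-1) ^ k * t ^ (i - k)) * (c j * x j ^ k))"
    by (rule sum.swap)
  also have "\<dots> = (\<Sum>k\<le>i. (of_nat (i choose k) * (-1) ^ k * t ^ (i - k)) * (\<Sum>j\<in>A. c j * x j ^ k))"
    by (simp add: sum_distrib_left)
  also have "\<dots> = 0"
    using horth i by (intro sum.neutral) auto
  finally show ?thesis .
qed

lemma w_orth:
  fixes c x :: "nat \<Rightarrow> real"
  assumes horth: "\<And>\<alpha>. \<alpha> < m - 1 \<Longrightarrow> (\<Sum>j\<in>A. c j * x j ^ \<alpha>) = 0"
    and hexp: "(\<Sum>j\<in>A. c j * exp (- x j)) = 0"
  shows "(\<Sum>j\<in>A. c j * eT (m - 1) (x j - t)) = 0"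
proof -
  have e: "c j * eT (m - 1) (x j - t) = exp t * (c j * exp (- x j))
      - (\<Sum>i<m - 1. (c j * (t - x j) ^ i) / fact i)" for j
  proof -
    have "exp (- (x j - t)) = exp t * exp (- x j)"
      by (simp add: mult_exp_exp)
    then show ?thesis unfolding eT_def by (simp add: right_diff_distrib sum_distrib_left)
  qed
  have "(\<Sum>j\<in>A. c j * eT (m - 1) (x j - t))
      = exp t * (\<Sum>j\<in>A. c j * exp (- x j)) - (\<Sum>j\<in>A. \<Sum>i<m - 1. (c j * (t - x j) ^ i) / fact i)"
    unfolding e by (simp add: sum_subtractf sum_distrib_left)
  also have "(\<Sum>j\<in>A. \<Sum>i<m - 1. (c j * (t - x j) ^ i) / fact i)
      = (\<Sum>i<m - 1. \<Sum>j\<in>A. (c j * (t - x j) ^ i) / fact i)"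
    by (rule sum.swap)
  also have "\<dots> = (\<Sum>i<m - 1. (\<Sum>j\<in>A. c j * (t - x j) ^ i) / fact i)"
    by (simp add: sum_divide_distrib)
  also have "\<dots> = 0"
    using poly_orth[OF horth] by simp
  finally show ?thesis using hexp by simp
qed

lemma binom_orth:
  fixes c x :: "nat \<Rightarrow> real"
  assumes horth: "\<And>\<alpha>. \<alpha> < m - 1 \<Longrightarrow> (\<Sum>j\<in>A. c j * x j ^ \<alpha>) = 0"
    and n: "n \<le> 2 * m - 3" and m2: "m \<ge> 2"
  shows "DS A c (\<lambda>a b. (x a - x b) ^ n) = 0"
proof -
  have e: "(x a - x b) ^ n = (\<Sum>l\<le>n. of_nat (n choose l) * (-1) ^ (n - l) * (x a ^ l * x b ^ (n - l)))" for a b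
  proof -
    have "(x a - x b) ^ n = (x a + - x b) ^ n" by simp
    also have "\<dots> = (\<Sum>l\<le>n. of_nat (n choose l) * x a ^ l * (- x b) ^ (n - l))"
      by (rule binomial_ring)
    also have "\<dots> = (\<Sum>l\<le>n. of_nat (n choose l) * (-1) ^ (n - l) * (x a ^ l * x b ^ (n - l)))"
    proof (rule sum.cong[OF refl])
      fix l
      have "(- x b) ^ (n - l) = (-1) ^ (n - l) * x b ^ (n - l)" by (rule power_minus)
      then show "of_nat (n choose l) * x a ^ l * (- x b) ^ (n - l) = of_nat (n choose l) * (-1) ^ (n - l) * (x a ^ l * x b ^ (n - l))"
        by simp
    qed
    finally show ?thesis .
  qed
  have "DS A c (\<lambda>a b. (x a - x b) ^ n)
     = (\<Sum>l\<le>n. of_nat (n choose l) * (-1) ^ (n - l) *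
          ((\<Sum>a\<in>A. c a * x a ^ l) * (\<Sum>b\<in>A. c b * x b ^ (n - l))))"
    unfolding e DS_sum DS_cmult DS_prod ..
  also have "\<dots> = 0"
  proof (rule sum.neutral, rule ballI)
    fix l assume "l \<in> {..n}"
    then have "l < m - 1 \<or> n - l < m - 1" using n m2 by auto
    then show "of_nat (n choose l) * (-1) ^ (n - l) *
          ((\<Sum>a\<in>A. c a * x a ^ l) * (\<Sum>b\<in>A. c b * x b ^ (n - l))) = 0"
      using horth by auto
  qed
  finally show ?thesis .
qed

lemma gg_orth:
  fixes c x :: "nat \<Rightarrow> real"
  assumes horth: "\<And>\<alpha>. \<alpha> < m - 1 \<Longrightarrow> (\<Sum>j\<in>A. c j * x j ^ \<alpha>) = 0"
    and hexp: "(\<Sum>j\<in>A. c j * exp (- x j)) = 0" and m2: "m \<ge> 2"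
  shows "DS A c (\<lambda>a b. gg m (x a - x b)) = 0"
proof -
  have e: "(\<lambda>a b. gg m (x a - x b)) = (\<lambda>a b. (exp (x a) * exp (- x b) - exp (- x a) * exp (x b)) / 2
     - (\<Sum>k = 1..m - 1. (x a - x b) ^ (2 * k - 1) / fact (2 * k - 1)))"
    unfolding gg_def by (simp add: mult_exp_exp)
  have s1: "DS A c (\<lambda>a b. exp (x a) * exp (- x b)) = 0"
    unfolding DS_prod using hexp by simp
  have s2: "DS A c (\<lambda>a b. exp (- x a) * exp (x b)) = 0"
    unfolding DS_prod using hexp by simp
  have s3: "DS A c (\<lambda>a b. (x a - x b) ^ (2 * k - 1)) = 0" if "k \<in> {1..m - 1}" for k
    using that m2 by (intro binom_orth[OF horth]) auto
  show ?thesis unfolding e DS_diff DS_div DS_sum s1 s2 using s3 by simp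
qed

lemma gg_0: "gg m 0 = 0"
proof -
  have "(\<Sum>k = 1..m - 1. (0::real) ^ (2 * k - 1) / fact (2 * k - 1)) = 0"
    by (rule sum.neutral) auto
  then show ?thesis unfolding gg_def by simp
qed

lemma G_split: "G m d = (if 0 \<le> d then gg m d else 0) - gg m d / 2"
proof -
  have "G m d = sgn d / 2 * gg m d" unfolding G_def gg_def ..
  then show ?thesis
    by (cases "d > 0"; cases "d = 0") (auto simp: gg_0)
qed

lemma Q_T:
  fixes c x :: "nat \<Rightarrow> real"
  assumes horth: "\<And>\<alpha>. \<alpha> < m - 1 \<Longrightarrow> (\<Sum>j\<in>A. c j * x j ^ \<alpha>) = 0"
    and hexp: "(\<Sum>j\<in>A. c j * exp (- x j)) = 0" and m2: "m \<ge> 2"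
  shows "DS A c (\<lambda>a b. G m (x a - x b)) = DS A c (\<lambda>a b. if x b \<le> x a then gg m (x a - x b) else 0)"
proof -
  have e: "(\<lambda>a b. G m (x a - x b)) = (\<lambda>a b. (if x b \<le> x a then gg m (x a - x b) else 0) - gg m (x a - x b) / 2)"
    by (simp add: G_split fun_eq_iff)
  show ?thesis unfolding e DS_diff DS_div using gg_orth[OF horth hexp m2] by simp
qed

definition pp :: "nat \<Rightarrow> (nat \<Rightarrow> real) \<Rightarrow> nat \<Rightarrow> real \<Rightarrow> real" where
  "pp m x j t = (if t \<le> x j then eT (m - 1) (x j - t) else 0)"

definition qq :: "nat \<Rightarrow> (nat \<Rightarrow> real) \<Rightarrow> nat \<Rightarrow> real \<Rightarrow> real" where
  "qq m x j t = (if x j \<le> t then eT (m - 1) (x j - t) else 0)"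

lemma eT_m0: "m \<ge> 2 \<Longrightarrow> eT (m - 1) 0 = 0"
  using eT_at0[of "m - 2"] by (simp add: Suc_diff_Suc numeral_2_eq_2)

lemma pq_sum: "m \<ge> 2 \<Longrightarrow> pp m x j t + qq m x j t = eT (m - 1) (x j - t)"
  unfolding pp_def qq_def using eT_m0[of m] by auto

lemma pq_prod: "pp m x a t * qq m x b t =
   (if t \<in> {x b..x a} then eT (m - 1) (x a - t) * eT (m - 1) (x b - t) else 0)"
  unfolding pp_def qq_def by auto

lemma pq_int:
  assumes "x a \<in> {0..1}" "x b \<in> {0..1}" "m \<ge> 2"
  shows "((\<lambda>t. pp m x a t * qq m x b t) has_integral
     ((-1) ^ (m - 1) * (if x b \<le> x a then gg m (x a - x b) else 0))) {-1..2}"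
proof -
  have sub: "{x b..x a} \<subseteq> {-1..(2::real)}" using assms by auto
  have "((\<lambda>t. eT (m - 1) (x a - t) * eT (m - 1) (x b - t)) has_integral
     ((-1) ^ (m - 1) * (if x b \<le> x a then gg m (x a - x b) else 0))) {x b..x a}"
  proof (cases "x b \<le> x a")
    case True
    then show ?thesis using key_int[OF True, of m] assms(3) by simp
  next
    case False
    then show ?thesis by simp
  qed
  then show ?thesis unfolding pq_prod by (subst has_integral_restrict[OF sub])
qed

definition psi :: "nat \<Rightarrow> (nat \<Rightarrow> real) \<Rightarrow> nat set \<Rightarrow> (nat \<Rightarrow> real) \<Rightarrow> real \<Rightarrow> real" where
  "psi m x A c t = (\<Sum>j\<in>A. c j * pp m x j t)"

lemma psi_neg:
  fixes c x :: "nat \<Rightarrow> real"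
  assumes horth: "\<And>\<alpha>. \<alpha> < m - 1 \<Longrightarrow> (\<Sum>j\<in>A. c j * x j ^ \<alpha>) = 0"
    and hexp: "(\<Sum>j\<in>A. c j * exp (- x j)) = 0" and m2: "m \<ge> 2"
  shows "(\<Sum>j\<in>A. c j * qq m x j t) = - psi m x A c t"
proof -
  have "qq m x j t = eT (m - 1) (x j - t) - pp m x j t" for j
    using pq_sum[OF m2, of x j t] by simp
  then have "(\<Sum>j\<in>A. c j * qq m x j t) = (\<Sum>j\<in>A. c j * eT (m - 1) (x j - t)) - psi m x A c t"
    unfolding psi_def by (simp add: right_diff_distrib sum_subtractf)
  then show ?thesis using w_orth[OF horth hexp] by simp
qed

lemma psi_int:
  fixes c x :: "nat \<Rightarrow> real"
  assumes horth: "\<And>\<alpha>. \<alpha> < m - 1 \<Longrightarrow> (\<Sum>j\<in>A. c j * x j ^ \<alpha>) = 0"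
    and hexp: "(\<Sum>j\<in>A. c j * exp (- x j)) = 0" and m2: "m \<ge> 2"
    and fin: "finite A" and x01: "\<And>j. j \<in> A \<Longrightarrow> x j \<in> {0..1}"
  shows "((\<lambda>t. (psi m x A c t) ^ 2) has_integral
      ((-1) ^ m * DS A c (\<lambda>a b. if x b \<le> x a then gg m (x a - x b) else 0))) {-1..2}"
proof -
  define V where "V a b = (-1) ^ (m - 1) * (if x b \<le> x a then gg m (x a - x b) else 0)" for a b
  have h: "((\<lambda>t. c a * c b * (pp m x a t * qq m x b t)) has_integral (c a * c b * V a b)) {-1..2}"
    if "a \<in> A" "b \<in> A" for a b
    unfolding V_def by (rule has_integral_mult_right, rule pq_int) (use that x01 m2 in auto)
  have "((\<lambda>t. \<Sum>a\<in>A. \<Sum>b\<in>A. c a * c b * (pp m x a t * qq m x b t)) has_integral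
      (\<Sum>a\<in>A. \<Sum>b\<in>A. c a * c b * V a b)) {-1..2}"
    using h fin by (intro has_integral_sum) auto
  moreover have "(\<Sum>a\<in>A. \<Sum>b\<in>A. c a * c b * (pp m x a t * qq m x b t)) = - ((psi m x A c t) ^ 2)" for t
  proof -
    have "(\<Sum>a\<in>A. \<Sum>b\<in>A. c a * c b * (pp m x a t * qq m x b t))
        = (\<Sum>a\<in>A. c a * pp m x a t) * (\<Sum>b\<in>A. c b * qq m x b t)"
      by (simp add: sum_product mult_ac)
    also have "\<dots> = - ((psi m x A c t) ^ 2)"
      using psi_neg[OF horth hexp m2, of t] by (simp add: psi_def power2_eq_square)
    finally show ?thesis .
  qed
  moreover have "(\<Sum>a\<in>A. \<Sum>b\<in>A. c a * c b * V a b)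
      = (-1) ^ (m - 1) * DS A c (\<lambda>a b. if x b \<le> x a then gg m (x a - x b) else 0)"
    unfolding DS_cmult[symmetric] unfolding DS_def V_def ..
  ultimately have "((\<lambda>t. - ((psi m x A c t) ^ 2)) has_integral
      ((-1) ^ (m - 1) * DS A c (\<lambda>a b. if x b \<le> x a then gg m (x a - x b) else 0))) {-1..2}"
    by simp
  from has_integral_neg[OF this] show ?thesis
    using m2 by (cases m) auto
qed

lemma eT_pos:
  assumes "k \<ge> 1" "s < 0"
  shows "eT k s > 0"
proof -
  from Maclaurin_exp_lt[of "- s" k] assms obtain t where
    "exp (- s) = (\<Sum>j<k. (- s) ^ j / fact j) + exp t / fact k * (- s) ^ k" by auto
  moreover have "exp t / fact k * (- s) ^ k > 0" using assms by simp
  ultimately show ?thesis unfolding eT_def by simp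
qed

lemma key_nonzero:
  fixes c x :: "nat \<Rightarrow> real"
  assumes horth: "\<And>\<alpha>. \<alpha> < m - 1 \<Longrightarrow> (\<Sum>j\<in>A. c j * x j ^ \<alpha>) = 0"
    and hexp: "(\<Sum>j\<in>A. c j * exp (- x j)) = 0" and m2: "m \<ge> 2"
    and fin: "finite A" and x01: "\<And>j. j \<in> A \<Longrightarrow> x j \<in> {0..1}"
    and inj: "inj_on x A"
    and hQ: "DS A c (\<lambda>a b. G m (x a - x b)) = 0"
  shows "\<forall>j\<in>A. c j = 0"
proof (rule ccontr)
  assume "\<not> (\<forall>j\<in>A. c j = 0)"
  then obtain j1 where j1: "j1 \<in> A" "c j1 \<noteq> 0" by auto
  define B where "B = {j\<in>A. c j \<noteq> 0}"
  have finB: "finite B" unfolding B_def using fin by simp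
  have neB: "B \<noteq> {}" unfolding B_def using j1 by auto
  define x0 where "x0 = Min (x ` B)"
  have "x0 \<in> x ` B" unfolding x0_def using finB neB by (intro Min_in) auto
  then obtain j0 where j0: "j0 \<in> B" "x j0 = x0" by auto
  have xmin: "x0 \<le> x j" if "j \<in> B" for j
    unfolding x0_def using finB that by (intro Min_le) auto
  have j0A: "j0 \<in> A" and cj0: "c j0 \<noteq> 0" using j0 unfolding B_def by auto
  have x01': "x0 \<in> {0..1}" using x01[OF j0A] j0 by simp
  define U where "U = insert 2 (x ` {j\<in>B. x0 < x j})"
  define u where "u = Min U"
  have finU: "finite U" unfolding U_def using finB by simp
  have "x0 < u" unfolding u_def using finU x01' by (subst Min_gr_iff) (auto simp: U_def)
  have u2: "u \<le> 2" unfolding u_def using finU by (intro Min_le) (auto simp: U_def)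
  have ule: "u \<le> x j" if "j \<in> B" "x0 < x j" for j
    unfolding u_def using finU that by (intro Min_le) (auto simp: U_def)
  have qsum: "(\<Sum>j\<in>A. c j * qq m x j t) = c j0 * eT (m - 1) (x0 - t)" if t: "x0 \<le> t" "t < u" for t
  proof -
    have "(\<Sum>j\<in>A. c j * qq m x j t) = (\<Sum>j\<in>A. if j = j0 then c j0 * eT (m - 1) (x0 - t) else 0)"
    proof (rule sum.cong[OF refl])
      fix j assume jA: "j \<in> A"
      show "c j * qq m x j t = (if j = j0 then c j0 * eT (m - 1) (x0 - t) else 0)"
      proof (cases "j = j0")
        case True
        then show ?thesis using t j0 by (simp add: qq_def)
      next
        case False
        show ?thesis
        proof (cases "c j = 0")
          case True
          then show ?thesis using False by simp
        next
          case cne: False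
          then have jB: "j \<in> B" unfolding B_def using jA by simp
          have "x j \<noteq> x0" using False inj jA j0A j0 unfolding inj_on_def by metis
          then have "x0 < x j" using xmin[OF jB] by simp
          then have "u \<le> x j" using ule jB by simp
          then have "qq m x j t = 0" using t unfolding qq_def by simp
          then show ?thesis using False by simp
        qed
      qed
    qed
    also have "\<dots> = c j0 * eT (m - 1) (x0 - t)" using fin j0A by (simp add: sum.delta)
    finally show ?thesis .
  qed
  have psi_eq: "(psi m x A c t) ^ 2 = (c j0 * eT (m - 1) (x0 - t)) ^ 2" if "x0 \<le> t" "t < u" for t
  proof -
    have "psi m x A c t = - (c j0 * eT (m - 1) (x0 - t))"
      using psi_neg[OF horth hexp m2, of t] qsum[OF that] by simp
    then show ?thesis by simp
  qed
  have h0: "((\<lambda>t. (psi m x A c t) ^ 2) has_integral 0) {-1..2}"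
    using psi_int[OF horth hexp m2 fin x01] Q_T[OF horth hexp m2] hQ by simp
  define a where "a = x0 + (u - x0) / 3"
  define b where "b = x0 + 2 * (u - x0) / 3"
  have ab: "a < b" "x0 < a" "b < u" unfolding a_def b_def using \<open>x0 < u\<close> by (auto simp: field_simps)
  have sub: "{a..b} \<subseteq> {-1..(2::real)}" using ab x01' u2 by auto
  have "(\<lambda>t. (psi m x A c t) ^ 2) integrable_on {a..b}"
    by (rule integrable_subinterval_real[OF has_integral_integrable[OF h0] sub])
  then obtain i where hi: "((\<lambda>t. (psi m x A c t) ^ 2) has_integral i) {a..b}"
    by (auto simp: integrable_on_def)
  have "i \<le> 0" by (rule has_integral_subset_le[OF sub hi h0]) auto
  moreover have "0 \<le> i" by (rule has_integral_nonneg[OF hi]) auto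
  ultimately have hi0: "((\<lambda>t. (psi m x A c t) ^ 2) has_integral 0) {a..b}" using hi by simp
  define g where "g t = (c j0 * eT (m - 1) (x0 - t)) ^ 2" for t
  have hg: "(g has_integral 0) (cbox a b)"
    unfolding cbox_interval g_def
    by (rule has_integral_eq[OF _ hi0]) (use ab psi_eq in auto)
  have contg: "continuous_on (cbox a b) g"
    unfolding g_def by (intro continuous_intros continuous_on_compose2[OF eT_cont]) auto
  have "g a = 0"
    by (rule has_integral_0_cbox_imp_0[OF contg _ hg]) (use ab in \<open>auto simp: g_def box_real cbox_interval\<close>)
  moreover have "eT (m - 1) (x0 - a) > 0" using m2 ab by (intro eT_pos) auto
  ultimately show False using cj0 unfolding g_def by simp
qed

lemma sum_split_add:
  fixes a b :: nat and f :: "nat \<Rightarrow> real"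
  shows "(\<Sum>k<a + b. f k) = (\<Sum>k<a. f k) + (\<Sum>k<b. f (a + k))"
  by (induction b) (auto simp: add.assoc)

definition SS :: "nat \<Rightarrow> (nat \<Rightarrow> real) \<Rightarrow> nat \<Rightarrow> nat \<Rightarrow> real" where
  "SS m x \<alpha> j = (if \<alpha> \<le> m - 2 then x j ^ \<alpha> else exp (- x j))"

lemma S_idx: "\<alpha> < m \<Longrightarrow> j < N + 1 \<Longrightarrow> S_mat m N x $$ (\<alpha>, j) = SS m x \<alpha> j"
  unfolding S_mat_def SS_def by simp

lemma S_dims: "dim_row (S_mat m N x) = m" "dim_col (S_mat m N x) = N + 1"
  unfolding S_mat_def by simp_all

lemma Q_dims: "Q_mat m N x \<in> carrier_mat (N + 1 + m) (N + 1 + m)"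
  unfolding carrier_mat_def Q_mat_def M_mat_def S_mat_def by simp

lemma QA: "i < N + 1 \<Longrightarrow> j < N + 1 \<Longrightarrow> Q_mat m N x $$ (i, j) = G m (x i - x j)"
  unfolding Q_mat_def M_mat_def S_mat_def by simp

lemma QB: "i < N + 1 \<Longrightarrow> \<alpha> < m \<Longrightarrow> Q_mat m N x $$ (i, N + 1 + \<alpha>) = SS m x \<alpha> i"
  unfolding Q_mat_def M_mat_def S_mat_def SS_def by simp

lemma QC: "\<alpha> < m \<Longrightarrow> j < N + 1 \<Longrightarrow> Q_mat m N x $$ (N + 1 + \<alpha>, j) = SS m x \<alpha> j"
  unfolding Q_mat_def M_mat_def S_mat_def SS_def by simp

lemma QD: "\<alpha> < m \<Longrightarrow> \<beta> < m \<Longrightarrow> Q_mat m N x $$ (N + 1 + \<alpha>, N + 1 + \<beta>) = 0"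
  unfolding Q_mat_def M_mat_def S_mat_def by simp

lemma mult_vec_sum:
  assumes "A \<in> carrier_mat n n" "v \<in> carrier_vec n" "i < n"
  shows "(A *\<^sub>v v) $ i = (\<Sum>k<n. A $$ (i, k) * v $ k)"
  using assms by (simp add: scalar_prod_def atLeast0LessThan)

lemma SR_idx:
  assumes "R \<in> carrier_mat (N + 1) m" "\<alpha> < m" "\<beta> < m"
  shows "(S_mat m N x * R) $$ (\<alpha>, \<beta>) = (\<Sum>a<N + 1. SS m x \<alpha> a * R $$ (a, \<beta>))"
proof -
  have "(S_mat m N x * R) $$ (\<alpha>, \<beta>) = (\<Sum>a\<in>{0..<N + 1}. S_mat m N x $$ (\<alpha>, a) * R $$ (a, \<beta>))"
    using assms by (simp add: scalar_prod_def S_dims)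
  also have "\<dots> = (\<Sum>a<N + 1. SS m x \<alpha> a * R $$ (a, \<beta>))"
    using assms(2) by (intro sum.cong) (auto simp: S_idx)
  finally show ?thesis .
qed

theorem theorem3p2:
  fixes m N :: nat and x :: "nat \<Rightarrow> real"
  assumes "m \<ge> 2"
    and "\<And>i. i \<le> N \<Longrightarrow> x i \<in> {0..1}"
    and "inj_on x {0..N}"
    and "\<exists>R \<in> carrier_mat (N + 1) m. S_mat m N x * R = 1\<^sub>m m"
  shows "invertible_mat (Q_mat m N x)"
proof -
  define n where "n = N + 1 + m"
  define Q where "Q = Q_mat m N x"
  have Qc: "Q \<in> carrier_mat n n" using Q_dims n_def Q_def by simp
  obtain R where R: "R \<in> carrier_mat (N + 1) m" "S_mat m N x * R = 1\<^sub>m m" using assms(4) by auto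
  have m2: "m \<ge> 2" using assms(1) .
  have kern: "v = 0\<^sub>v n" if v: "v \<in> carrier_vec n" "Q *\<^sub>v v = 0\<^sub>v n" for v
  proof -
    define c where "c j = v $ j" for j
    define l where "l \<alpha> = v $ (N + 1 + \<alpha>)" for \<alpha>
    have row: "(\<Sum>k<n. Q $$ (i, k) * v $ k) = 0" if "i < n" for i
      using mult_vec_sum[OF Qc v(1) that] v(2) that by simp
    have rowsplit: "(\<Sum>k<n. Q $$ (i, k) * v $ k)
        = (\<Sum>j<N + 1. Q $$ (i, j) * c j) + (\<Sum>\<alpha><m. Q $$ (i, N + 1 + \<alpha>) * l \<alpha>)" for i
      unfolding n_def c_def l_def by (rule sum_split_add)
    have rowA: "(\<Sum>j<N + 1. G m (x i - x j) * c j) + (\<Sum>\<alpha><m. SS m x \<alpha> i * l \<alpha>) = 0"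
      if i: "i < N + 1" for i
    proof -
      have "(\<Sum>j<N + 1. Q $$ (i, j) * c j) = (\<Sum>j<N + 1. G m (x i - x j) * c j)"
        using i by (intro sum.cong) (auto simp: Q_def QA)
      moreover have "(\<Sum>\<alpha><m. Q $$ (i, N + 1 + \<alpha>) * l \<alpha>) = (\<Sum>\<alpha><m. SS m x \<alpha> i * l \<alpha>)"
        using i by (intro sum.cong) (auto simp: Q_def QB[simplified])
      ultimately show ?thesis using row[of i] rowsplit[of i] i unfolding n_def by simp
    qed
    have rowC: "(\<Sum>j<N + 1. SS m x \<alpha> j * c j) = 0" if a: "\<alpha> < m" for \<alpha>
    proof -
      have "(\<Sum>j<N + 1. Q $$ (N + 1 + \<alpha>, j) * c j) = (\<Sum>j<N + 1. SS m x \<alpha> j * c j)"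
        using a by (intro sum.cong) (auto simp: Q_def QC[simplified])
      moreover have "(\<Sum>\<beta><m. Q $$ (N + 1 + \<alpha>, N + 1 + \<beta>) * l \<beta>) = 0"
        using a by (intro sum.neutral) (auto simp: Q_def QD[simplified])
      ultimately show ?thesis using row[of "N + 1 + \<alpha>"] rowsplit[of "N + 1 + \<alpha>"] a unfolding n_def by simp
    qed
    have horth: "(\<Sum>j\<in>{..<N + 1}. c j * x j ^ \<alpha>) = 0" if "\<alpha> < m - 1" for \<alpha>
    proof -
      have "(\<Sum>j\<in>{..<N + 1}. c j * x j ^ \<alpha>) = (\<Sum>j<N + 1. SS m x \<alpha> j * c j)"
        using that by (intro sum.cong) (auto simp: SS_def)
      then show ?thesis using rowC[of \<alpha>] that by simp
    qed
    have hexp: "(\<Sum>j\<in>{..<N + 1}. c j * exp (- x j)) = 0"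
    proof -
      have "(\<Sum>j\<in>{..<N + 1}. c j * exp (- x j)) = (\<Sum>j<N + 1. SS m x (m - 1) j * c j)"
        using m2 by (intro sum.cong) (auto simp: SS_def)
      then show ?thesis using rowC[of "m - 1"] m2 by simp
    qed
    have hQ: "DS {..<N + 1} c (\<lambda>a b. G m (x a - x b)) = 0"
    proof -
      have "0 = (\<Sum>a<N + 1. c a * ((\<Sum>j<N + 1. G m (x a - x j) * c j) + (\<Sum>\<alpha><m. SS m x \<alpha> a * l \<alpha>)))"
        using rowA by simp
      also have "\<dots> = DS {..<N + 1} c (\<lambda>a b. G m (x a - x b))
          + (\<Sum>a<N + 1. \<Sum>\<alpha><m. c a * SS m x \<alpha> a * l \<alpha>)"
        unfolding DS_def by (simp add: distrib_left sum.distrib sum_distrib_left mult_ac)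
      also have "(\<Sum>a<N + 1. \<Sum>\<alpha><m. c a * SS m x \<alpha> a * l \<alpha>)
          = (\<Sum>\<alpha><m. \<Sum>a<N + 1. c a * SS m x \<alpha> a * l \<alpha>)"
        by (rule sum.swap)
      also have "\<dots> = (\<Sum>\<alpha><m. l \<alpha> * (\<Sum>a<N + 1. SS m x \<alpha> a * c a))"
        by (intro sum.cong refl) (simp only: sum_distrib_left mult_ac)
      also have "\<dots> = 0" using rowC by simp
      finally show ?thesis by simp
    qed
    have x01: "x j \<in> {0..1}" if "j \<in> {..<N + 1}" for j using assms(2) that by auto
    have inj: "inj_on x {..<N + 1}"
    proof -
      have "{..<N + 1} = {0..N}" by auto
      then show ?thesis using assms(3) by simp
    qed
    have c0: "\<forall>j\<in>{..<N + 1}. c j = 0"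
      by (rule key_nonzero[OF horth hexp m2 _ x01 inj hQ]) auto
    have lrow: "(\<Sum>\<alpha><m. SS m x \<alpha> i * l \<alpha>) = 0" if "i < N + 1" for i
      using rowA[OF that] c0 by simp
    have l0: "l \<beta> = 0" if b: "\<beta> < m" for \<beta>
    proof -
      have "(\<Sum>\<alpha><m. l \<alpha> * (1\<^sub>m m) $$ (\<alpha>, \<beta>)) = (\<Sum>\<alpha><m. if \<alpha> = \<beta> then l \<alpha> else 0)"
        using b by (intro sum.cong) auto
      also have "\<dots> = l \<beta>" using b by (simp add: sum.delta)
      finally have "l \<beta> = (\<Sum>\<alpha><m. l \<alpha> * (1\<^sub>m m) $$ (\<alpha>, \<beta>))" ..
      also have "\<dots> = (\<Sum>\<alpha><m. l \<alpha> * (\<Sum>a<N + 1. SS m x \<alpha> a * R $$ (a, \<beta>)))"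
        using b by (intro sum.cong) (auto simp: R(2)[symmetric] SR_idx[OF R(1)])
      also have "\<dots> = (\<Sum>\<alpha><m. \<Sum>a<N + 1. R $$ (a, \<beta>) * (SS m x \<alpha> a * l \<alpha>))"
        by (intro sum.cong refl) (simp only: sum_distrib_left mult_ac)
      also have "\<dots> = (\<Sum>a<N + 1. \<Sum>\<alpha><m. R $$ (a, \<beta>) * (SS m x \<alpha> a * l \<alpha>))"
        by (rule sum.swap)
      also have "\<dots> = (\<Sum>a<N + 1. R $$ (a, \<beta>) * (\<Sum>\<alpha><m. SS m x \<alpha> a * l \<alpha>))"
        by (intro sum.cong refl) (simp only: sum_distrib_left)
      also have "\<dots> = 0" using lrow by simp
      finally show ?thesis .
    qed
    show ?thesis
    proof (rule eq_vecI)
      show "dim_vec v = dim_vec (0\<^sub>v n)" using v(1) by simp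
      fix k assume k: "k < dim_vec (0\<^sub>v n)"
      show "v $ k = 0\<^sub>v n $ k"
      proof (cases "k < N + 1")
        case True
        then show ?thesis using c0 k unfolding c_def by simp
      next
        case False
        then have "k = N + 1 + (k - (N + 1))" by simp
        moreover have "k - (N + 1) < m" using k False unfolding n_def by simp
        ultimately show ?thesis using l0[of "k - (N + 1)"] k unfolding l_def by simp
      qed
    qed
  qed
  have "det Q \<noteq> 0" using det_0_iff_vec_prod_zero[OF Qc] kern by auto
  from det_non_zero_imp_unit[OF Qc this, of "()"]
  obtain B where B: "B \<in> carrier_mat n n" "B * Q = 1\<^sub>m n" "Q * B = 1\<^sub>m n"
    unfolding Units_def ring_mat_def by auto
  show ?thesis unfolding Q_def[symmetric] invertible_mat_def inverts_mat_def square_mat.simps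
    using Qc B by auto
qed

end
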